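(* Let $\mathrm{FOV}_{\min}\in(0,\pi/2]$, $L_{\max}>0$ and $A_{\max}>0$. Then the set $\mathcal S=\{(B,\mathrm{FOV}): B>0,\ \mathrm{FOV}\in(0,\pi/2],\ \mathrm{FOV}\ge\mathrm{FOV}_{\min},\ L_{\mathrm{ADR}}(B,\mathrm{FOV})\le L_{\max},\ A_{\mathrm{ADR}}(B,\mathrm{FOV})\le A_{\max}\}$ equals $\{(B,\mathrm{FOV}): B>0,\ \mathrm{FOV}\in(0,\pi/2],\ \mathrm{FOV}\ge f_{\mathrm{FOV}}(B)\}$, where $f_{\mathrm{FOV}}(B)=\max\{\mathrm{FOV}_{\min},\,f_{\mathrm L}^{-1}(B),\,f_{\mathrm A}^{-1}(B)\}$. Consequently, maximising $R(B,\mathrm{FOV})$ over $\mathcal S$ is the same problem as maximising $R(B,\mathrm{FOV})$ subject to the single constraint $\mathrm{FOV}\ge f_{\mathrm{FOV}}(B)$ (with $B>0$, $\mathrm{FOV}\in(0,\pi/2]$).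
   Context: Fix constants: an integer $N_{\mathrm{tier}}\ge1$; an integer $N_{\mathrm{PD}}\ge 1$; $\mathrm{FF}\in(0,1]$; $K_{\mathrm{PD}}>0$; $n_{\mathrm{CPC}}\ge 1$; $P_{\mathrm t}>0$; $w>0$; $R_{\mathrm{PD}}>0$; $\Gamma>0$; $N_0>0$. The design variables are $B>0$ and $\mathrm{FOV}\in(0,\pi/2]$. Write $\theta=\theta_{\mathrm{CPC}}=\mathrm{FOV}/(2N_{\mathrm{tier}}+1)$. Define $D_2(B)=\frac{1}{K_{\mathrm{PD}}B}\sqrt{N_{\mathrm{PD}}/\mathrm{FF}}$, $D_1(B,\mathrm{FOV})=D_2(B)\,\frac{n_{\mathrm{CPC}}}{\sin\theta}$, $P_{\mathrm r}(B,\mathrm{FOV})=\mathrm{FF}\,P_{\mathrm t}\Big(1-\exp\Big(-\frac{D_1(B,\mathrm{FOV})^2}{2w^2}\Big)\Big)$, and the achievable rate $R(B,\mathrm{FOV})=B\log_2\Big(1+\frac{(R_{\mathrm{PD}}P_{\mathrm r}(B,\mathrm{FOV}))^2}{\Gamma N_0 B}\Big)$. Set $K_1=\frac{1}{2K_{\mathrm{PD}}}\sqrt{N_{\mathrm{PD}}/\mathrm{FF}}$ and $K_2=\frac{\pi N_{\mathrm{PD}}n_{\mathrm{CPC}}^2}{4\,\mathrm{FF}\,K_{\mathrm{PD}}^2}$, and define $L_{\mathrm{ADR}}(B,\mathrm{FOV})=\frac{K_1}{B}\cdot\frac{n_{\mathrm{CPC}}+\sin\theta}{\sin\theta\,\tan\theta}$,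 $A_{\mathrm{ADR}}(B,\mathrm{FOV})=\frac{K_2}{B^2\sin^2\theta}\Big(1+\sum_{i=1}^{N_{\mathrm{tier}}}6i\cos(2i\theta)\Big)$. Given $L_{\max},A_{\max}>0$, define for $\mathrm{FOV}\in(0,\pi/2]$ the boundary functions (the value of $B$ at which the respective dimension constraint holds with equality) $f_{\mathrm L}(\mathrm{FOV})=\frac{K_1}{L_{\max}}\cdot\frac{n_{\mathrm{CPC}}+\sin\theta}{\sin\theta\tan\theta}$ and $f_{\mathrm A}(\mathrm{FOV})=\frac{1}{\sin\theta}\sqrt{\frac{K_2}{A_{\max}}\Big(1+\sum_{i=1}^{N_{\mathrm{tier}}}6i\cos(2i\theta)\Big)}$, and their (generalised) inverses $f_{\mathrm L}^{-1}(B)=\inf\{\mathrm{FOV}\in(0,\pi/2]: f_{\mathrm L}(\mathrm{FOV})\le B\}$ and $f_{\mathrm A}^{-1}(B)=\inf\{\mathrm{FOV}\in(0,\pi/2]: f_{\mathrm A}(\mathrm{FOV})\le B\}$, with the convention $\inf\emptyset=+\infty$. *)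

theory Defs
  imports "HOL-Analysis.Analysis"
begin

definition thetaCPC :: "nat \<Rightarrow> real \<Rightarrow> real" where
  "thetaCPC Ntier FOV = FOV / (2 * real Ntier + 1)"

definition tierSum :: "nat \<Rightarrow> real \<Rightarrow> real" where
  "tierSum Ntier \<theta> = 1 + (\<Sum>i=1..Ntier. 6 * real i * cos (2 * real i * \<theta>))"

definition K1 :: "real \<Rightarrow> nat \<Rightarrow> real \<Rightarrow> real" where
  "K1 KPD NPD FF = (1 / (2 * KPD)) * sqrt (real NPD / FF)"

definition K2 :: "real \<Rightarrow> nat \<Rightarrow> real \<Rightarrow> real \<Rightarrow> real" where
  "K2 KPD NPD FF nCPC = pi * real NPD * nCPC^2 / (4 * FF * KPD^2)"

definition D2 :: "real \<Rightarrow> nat \<Rightarrow> real \<Rightarrow> real \<Rightarrow> real" where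
  "D2 KPD NPD FF B = (1 / (KPD * B)) * sqrt (real NPD / FF)"

definition D1 :: "real \<Rightarrow> nat \<Rightarrow> real \<Rightarrow> real \<Rightarrow> nat \<Rightarrow> real \<Rightarrow> real \<Rightarrow> real" where
  "D1 KPD NPD FF nCPC Ntier B FOV = D2 KPD NPD FF B * (nCPC / sin (thetaCPC Ntier FOV))"

definition Prx :: "real \<Rightarrow> real \<Rightarrow> real \<Rightarrow> nat \<Rightarrow> real \<Rightarrow> real \<Rightarrow> nat \<Rightarrow> real \<Rightarrow> real \<Rightarrow> real" where
  "Prx Pt w KPD NPD FF nCPC Ntier B FOV =
     FF * Pt * (1 - exp (- ((D1 KPD NPD FF nCPC Ntier B FOV)^2 / (2 * w^2))))"

definition Rate :: "real \<Rightarrow> real \<Rightarrow> real \<Rightarrow> real \<Rightarrow> real \<Rightarrow> real \<Rightarrow> nat \<Rightarrow> real \<Rightarrow> real \<Rightarrow> nat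
                    \<Rightarrow> real \<Rightarrow> real \<Rightarrow> real" where
  "Rate RPD Gam N0 Pt w KPD NPD FF nCPC Ntier B FOV =
     B * log 2 (1 + (RPD * Prx Pt w KPD NPD FF nCPC Ntier B FOV)^2 / (Gam * N0 * B))"

definition L_ADR :: "real \<Rightarrow> nat \<Rightarrow> real \<Rightarrow> real \<Rightarrow> nat \<Rightarrow> real \<Rightarrow> real \<Rightarrow> real" where
  "L_ADR KPD NPD FF nCPC Ntier B FOV =
     (let \<theta> = thetaCPC Ntier FOV in
      (K1 KPD NPD FF / B) * ((nCPC + sin \<theta>) / (sin \<theta> * tan \<theta>)))"

definition A_ADR :: "real \<Rightarrow> nat \<Rightarrow> real \<Rightarrow> real \<Rightarrow> nat \<Rightarrow> real \<Rightarrow> real \<Rightarrow> real" where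
  "A_ADR KPD NPD FF nCPC Ntier B FOV =
     (let \<theta> = thetaCPC Ntier FOV in
      (K2 KPD NPD FF nCPC / (B^2 * (sin \<theta>)^2)) * tierSum Ntier \<theta>)"

definition fL :: "real \<Rightarrow> nat \<Rightarrow> real \<Rightarrow> real \<Rightarrow> nat \<Rightarrow> real \<Rightarrow> real \<Rightarrow> real" where
  "fL KPD NPD FF nCPC Ntier Lmax FOV =
     (let \<theta> = thetaCPC Ntier FOV in
      (K1 KPD NPD FF / Lmax) * ((nCPC + sin \<theta>) / (sin \<theta> * tan \<theta>)))"

definition fA :: "real \<Rightarrow> nat \<Rightarrow> real \<Rightarrow> real \<Rightarrow> nat \<Rightarrow> real \<Rightarrow> real \<Rightarrow> real" where
  "fA KPD NPD FF nCPC Ntier Amax FOV =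
     (let \<theta> = thetaCPC Ntier FOV in
      (1 / sin \<theta>) * sqrt ((K2 KPD NPD FF nCPC / Amax) * tierSum Ntier \<theta>))"

definition genInv :: "(real \<Rightarrow> real) \<Rightarrow> real \<Rightarrow> ereal" where
  "genInv f B = (if {FOV \<in> {0<..pi/2}. f FOV \<le> B} = {} then \<infinity>
                 else ereal (Inf {FOV \<in> {0<..pi/2}. f FOV \<le> B}))"

definition fFOV :: "real \<Rightarrow> nat \<Rightarrow> real \<Rightarrow> real \<Rightarrow> nat \<Rightarrow> real \<Rightarrow> real \<Rightarrow> real \<Rightarrow> real \<Rightarrow> ereal" where
  "fFOV KPD NPD FF nCPC Ntier FOVmin Lmax Amax B =
     max (ereal FOVmin)
         (max (genInv (fL KPD NPD FF nCPC Ntier Lmax) B)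
              (genInv (fA KPD NPD FF nCPC Ntier Amax) B))"

end

theory Submission imports Defs begin
lemma genInv_iff:
  fixes f :: "real \<Rightarrow> real"
  assumes anti: "\<And>x y. 0<x \<Longrightarrow> x \<le> y \<Longrightarrow> y \<le> pi/2 \<Longrightarrow> f y \<le> f x"
  and cont: "\<And>x. 0<x \<Longrightarrow> x \<le> pi/2 \<Longrightarrow> isCont f x"
  and x: "0<x" "x \<le> pi/2"
  shows "genInv f B \<le> ereal x \<longleftrightarrow> f x \<le> B"
proof -
  define M where "M = {FOV \<in> {0<..pi/2}. f FOV \<le> B}"
  have bdd: "bdd_below M" unfolding M_def by (rule bdd_belowI[of _ 0]) auto
  have gi: "genInv f B = (if M = {} then \<infinity> else ereal (Inf M))"
    unfolding genInv_def M_def by simp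
  have gt: "f z \<le> B" if hz: "M \<noteq> {}" "Inf M < z" "z \<le> pi/2" for z
  proof -
    obtain y where "y \<in> M" "y < z" using cInf_less_iff[OF hz(1) bdd] hz(2) by auto
    then show ?thesis using anti[of y z] hz unfolding M_def by auto
  qed
  show ?thesis
  proof
    assume "f x \<le> B"
    then have xm: "x \<in> M" using x unfolding M_def by auto
    then have "Inf M \<le> x" using cInf_lower[OF xm bdd] by simp
    then show "genInv f B \<le> ereal x" using gi xm by auto
  next
    assume h: "genInv f B \<le> ereal x"
    then have ne: "M \<noteq> {}" using gi by (auto split: if_splits)
    then have le: "Inf M \<le> x" using h gi by auto
    show "f x \<le> B"
    proof (cases "Inf M < x")
      case True then show ?thesis using gt ne x by auto
    next
      case False
      then have eq: "Inf M = x" using le by auto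
      show ?thesis
      proof (cases "x = pi/2")
        case True
        obtain y where y: "y \<in> M" using ne by auto
        have "Inf M \<le> y" using cInf_lower[OF y bdd] .
        with y eq True have "y = x" unfolding M_def by auto
        with y show ?thesis unfolding M_def by auto
      next
        case False
        with x have xl: "x < pi/2" by auto
        have lim: "(f \<longlongrightarrow> f x) (at_right x)"
          using cont[OF x] by (simp add: isCont_def filterlim_at_split)
        have ev: "eventually (\<lambda>y. f y \<le> B) (at_right x)"
          unfolding eventually_at_right_field
          using xl gt ne eq by (intro exI[of _ "pi/2"]) auto
        show ?thesis using tendsto_upperbound[OF lim ev] by simp
      qed
    qed
  qed
qed
lemma theta_bounds_aux: "0 < x \<Longrightarrow> 0 \<le> thetaCPC N x" by (simp add: thetaCPC_def)

lemma theta_bounds: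
  assumes "Ntier \<ge> 1" "0 < x" "x \<le> pi/2"
  shows "0 < thetaCPC Ntier x" "thetaCPC Ntier x \<le> pi/6"
    "\<And>i. i \<le> Ntier \<Longrightarrow> 2 * real i * thetaCPC Ntier x < pi/2"
proof -
  have d: "2 * real Ntier + 1 \<ge> 3" using assms by auto
  show "0 < thetaCPC Ntier x" using assms by (simp add: thetaCPC_def)
  have "x / (2 * real Ntier + 1) \<le> x / 3" using assms d by (intro divide_left_mono) auto
  moreover have "x / 3 \<le> pi/6" using assms by simp
  ultimately show "thetaCPC Ntier x \<le> pi/6" unfolding thetaCPC_def by linarith
  fix i assume "i \<le> Ntier"
  then have "2 * real i * thetaCPC Ntier x \<le> 2 * real Ntier * thetaCPC Ntier x"
    using assms theta_bounds_aux by (intro mult_right_mono) auto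
  also have "\<dots> < (2 * real Ntier + 1) * thetaCPC Ntier x"
    using theta_bounds_aux[of x Ntier] assms(2) by (intro mult_strict_right_mono) (auto simp: thetaCPC_def)
  also have "\<dots> = x" by (simp add: thetaCPC_def)
  finally show "2 * real i * thetaCPC Ntier x < pi/2" using assms by simp
qed

lemma theta_mono: "x \<le> y \<Longrightarrow> thetaCPC N x \<le> thetaCPC N y"
  by (simp add: thetaCPC_def divide_right_mono)

lemma tierSum_ge1:
  assumes "Ntier \<ge> 1" "0 < x" "x \<le> pi/2"
  shows "tierSum Ntier (thetaCPC Ntier x) \<ge> 1"
proof -
  have "\<forall>i\<in>{1..Ntier}. 0 \<le> 6 * real i * cos (2 * real i * thetaCPC Ntier x)"
  proof
    fix i assume i: "i \<in> {1..Ntier}"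
    have "0 \<le> 2 * real i * thetaCPC Ntier x" using theta_bounds(1)[OF assms] by simp
    moreover have "2 * real i * thetaCPC Ntier x < pi/2" using theta_bounds(3)[OF assms] i by auto
    ultimately have "cos (2 * real i * thetaCPC Ntier x) \<ge> 0" by (intro cos_ge_zero) auto
    then show "0 \<le> 6 * real i * cos (2 * real i * thetaCPC Ntier x)" by simp
  qed
  then have "0 \<le> (\<Sum>i=1..Ntier. 6 * real i * cos (2 * real i * thetaCPC Ntier x))"
    by (intro sum_nonneg) blast
  then show ?thesis unfolding tierSum_def by simp
qed

lemma tierSum_anti:
  assumes "Ntier \<ge> 1" "0 < x" "x \<le> y" "y \<le> pi/2"
  shows "tierSum Ntier (thetaCPC Ntier y) \<le> tierSum Ntier (thetaCPC Ntier x)"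
proof -
  have x: "0 < x" "x \<le> pi/2" and y: "0 < y" "y \<le> pi/2" using assms by auto
  have "\<forall>i\<in>{1..Ntier}. 6 * real i * cos (2 * real i * thetaCPC Ntier y)
        \<le> 6 * real i * cos (2 * real i * thetaCPC Ntier x)"
  proof
    fix i assume i: "i \<in> {1..Ntier}"
    have "0 \<le> 2 * real i * thetaCPC Ntier x" using theta_bounds(1)[OF assms(1) x] by simp
    moreover have "2 * real i * thetaCPC Ntier y < pi/2" using theta_bounds(3)[OF assms(1) y] i by auto
    moreover have "2 * real i * thetaCPC Ntier x \<le> 2 * real i * thetaCPC Ntier y"
      using theta_mono[OF assms(3)] by (simp add: mult_left_mono)
    ultimately have "cos (2 * real i * thetaCPC Ntier y) \<le> cos (2 * real i * thetaCPC Ntier x)"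
      by (intro cos_monotone_0_pi_le) auto
    then show "6 * real i * cos (2 * real i * thetaCPC Ntier y)
        \<le> 6 * real i * cos (2 * real i * thetaCPC Ntier x)" by (simp add: mult_left_mono)
  qed
  then have "(\<Sum>i=1..Ntier. 6 * real i * cos (2 * real i * thetaCPC Ntier y)) \<le> (\<Sum>i=1..Ntier. 6 * real i * cos (2 * real i * thetaCPC Ntier x))"
    by (intro sum_mono) blast
  then show ?thesis unfolding tierSum_def by simp
qed

lemma sincos_anti:
  assumes "Ntier \<ge> 1" "0 < x" "x \<le> y" "y \<le> pi/2"
  shows "0 < sin (thetaCPC Ntier x)" "sin (thetaCPC Ntier x) \<le> sin (thetaCPC Ntier y)"
        "0 < cos (thetaCPC Ntier y)" "cos (thetaCPC Ntier y) \<le> cos (thetaCPC Ntier x)"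
proof -
  have x: "0 < x" "x \<le> pi/2" and y: "0 < y" "y \<le> pi/2" using assms by auto
  note bx = theta_bounds[OF assms(1) x] and b2 = theta_bounds[OF assms(1) y]
  note m = theta_mono[OF assms(3), of Ntier]
  show "0 < sin (thetaCPC Ntier x)" using bx by (intro sin_gt_zero) auto
  show "sin (thetaCPC Ntier x) \<le> sin (thetaCPC Ntier y)" using bx b2 m
    by (intro sin_monotone_2pi_le) auto
  show "0 < cos (thetaCPC Ntier y)" using b2 by (intro cos_gt_zero) auto
  show "cos (thetaCPC Ntier y) \<le> cos (thetaCPC Ntier x)" using bx b2 m
    by (intro cos_monotone_0_pi_le) auto
qed
lemma g_eq: "0 < s \<Longrightarrow> 0 < c \<Longrightarrow> tan t = s / c \<Longrightarrow> (n + s) / (s * tan t) = n * c / s^2 + c / s"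
proof -
  assume a: "0 < s" "0 < c" "tan t = s / c"
  have "(n + s) / (s * (s / c)) = n * c / s^2 + c / s"
    using a(1,2) by (simp add: divide_simps power2_eq_square) (simp add: algebra_simps)
  then show ?thesis using a(3) by simp
qed

lemma fL_anti:
  assumes "Ntier \<ge> 1" "0 < x" "x \<le> y" "y \<le> pi/2" "0 < K1 KPD NPD FF" "0 < Lmax" "nCPC \<ge> 0"
  shows "fL KPD NPD FF nCPC Ntier Lmax y \<le> fL KPD NPD FF nCPC Ntier Lmax x"
proof -
  note sc = sincos_anti[OF assms(1-4)]
  have x: "0 < x" "x \<le> pi/2" using assms by auto
  have cx: "0 < cos (thetaCPC Ntier x)" using sincos_anti[OF assms(1,2) order_refl x(2)] by simp
  have sy: "0 < sin (thetaCPC Ntier y)" using sc by linarith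
  define sx where "sx = sin (thetaCPC Ntier x)"
  define sy' where "sy' = sin (thetaCPC Ntier y)"
  define cx' where "cx' = cos (thetaCPC Ntier x)"
  define cy where "cy = cos (thetaCPC Ntier y)"
  have ex: "(nCPC + sx) / (sx * tan (thetaCPC Ntier x)) = nCPC * cx' / sx^2 + cx' / sx"
    using sc cx unfolding sx_def cx'_def by (intro g_eq) (auto simp: tan_def)
  have ey: "(nCPC + sy') / (sy' * tan (thetaCPC Ntier y)) = nCPC * cy / sy'^2 + cy / sy'"
    using sc sy unfolding sy'_def cy_def by (intro g_eq) (auto simp: tan_def)
  have p: "0 < sx" "sx \<le> sy'" "0 < cy" "cy \<le> cx'" using sc unfolding sx_def sy'_def cy_def cx'_def by auto
  have "sx^2 \<le> sy'^2" using p by (intro power_mono) auto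
  then have a1: "cy / sy'^2 \<le> cx' / sx^2" using p by (intro frac_le) auto
  have a2: "cy / sy' \<le> cx' / sx" using p by (intro frac_le) auto
  have "nCPC * cy / sy'^2 + cy / sy' \<le> nCPC * cx' / sx^2 + cx' / sx"
    using mult_left_mono[OF a1 assms(7)] a2 by simp
  then have "(nCPC + sy') / (sy' * tan (thetaCPC Ntier y)) \<le> (nCPC + sx) / (sx * tan (thetaCPC Ntier x))"
    using ex ey by simp
  then show ?thesis unfolding fL_def Let_def sx_def sy'_def using assms(5,6)
    by (intro mult_left_mono) auto
qed

lemma fA_anti:
  assumes "Ntier \<ge> 1" "0 < x" "x \<le> y" "y \<le> pi/2" "0 < K2 KPD NPD FF nCPC" "0 < Amax"
  shows "fA KPD NPD FF nCPC Ntier Amax y \<le> fA KPD NPD FF nCPC Ntier Amax x"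
proof -
  note sc = sincos_anti[OF assms(1-4)]
  have x: "0 < x" "x \<le> pi/2" using assms by auto
  have t: "tierSum Ntier (thetaCPC Ntier y) \<le> tierSum Ntier (thetaCPC Ntier x)"
    using tierSum_anti[OF assms(1-4)] .
  have t1: "tierSum Ntier (thetaCPC Ntier y) \<ge> 1" using tierSum_ge1[OF assms(1)] assms by auto
  have c: "0 < K2 KPD NPD FF nCPC / Amax" using assms by simp
  have q: "sqrt ((K2 KPD NPD FF nCPC / Amax) * tierSum Ntier (thetaCPC Ntier y))
      \<le> sqrt ((K2 KPD NPD FF nCPC / Amax) * tierSum Ntier (thetaCPC Ntier x))"
    using t c by (intro real_sqrt_le_mono mult_left_mono) auto
  have q0: "0 \<le> sqrt ((K2 KPD NPD FF nCPC / Amax) * tierSum Ntier (thetaCPC Ntier y))"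
    using c t1 by (intro real_sqrt_ge_zero mult_nonneg_nonneg) auto
  have "1 / sin (thetaCPC Ntier y) \<le> 1 / sin (thetaCPC Ntier x)"
    using sc by (intro divide_left_mono) auto
  then show ?thesis unfolding fA_def Let_def using q q0 sc
    by (intro mult_mono) auto
qed

lemma fL_cont:
  assumes "Ntier \<ge> 1" "0 < x" "x \<le> pi/2"
  shows "isCont (fL KPD NPD FF nCPC Ntier Lmax) x"
proof -
  note sc = sincos_anti[OF assms(1,2) order_refl assms(3)]
  have "isCont (\<lambda>x. (K1 KPD NPD FF / Lmax) * ((nCPC + sin (x / (2 * real Ntier + 1))) /
     (sin (x / (2 * real Ntier + 1)) * tan (x / (2 * real Ntier + 1))))) x"
    using sc unfolding thetaCPC_def
    by (intro continuous_intros) (auto simp: tan_def)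
  then show ?thesis unfolding fL_def Let_def thetaCPC_def by simp
qed

lemma fA_cont:
  assumes "Ntier \<ge> 1" "0 < x" "x \<le> pi/2"
  shows "isCont (fA KPD NPD FF nCPC Ntier Amax) x"
proof -
  note sc = sincos_anti[OF assms(1,2) order_refl assms(3)]
  have "isCont (\<lambda>x. (1 / sin (x / (2 * real Ntier + 1))) * sqrt ((K2 KPD NPD FF nCPC / Amax) *
      (1 + (\<Sum>i=1..Ntier. 6 * real i * cos (2 * real i * (x / (2 * real Ntier + 1))))))) x"
    using sc unfolding thetaCPC_def
    by (intro continuous_intros) auto
  then show ?thesis unfolding fA_def Let_def thetaCPC_def tierSum_def by simp
qed
lemma L_equiv_gen:
  fixes K G B Lm :: real
  assumes "0 < B" "0 < Lm"
  shows "K / B * G \<le> Lm \<longleftrightarrow> K / Lm * G \<le> B"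
  using assms by (simp add: field_simps)

lemma A_equiv_gen:
  fixes K T B Am s :: real
  assumes "0 < B" "0 < Am" "0 < s" "0 < K" "0 \<le> T"
  shows "K / (B^2 * s^2) * T \<le> Am \<longleftrightarrow> 1 / s * sqrt (K / Am * T) \<le> B"
proof -
  have "K / (B^2 * s^2) * T \<le> Am \<longleftrightarrow> K / Am * T \<le> (B * s)^2"
    using assms by (simp add: field_simps power_mult_distrib)
  also have "\<dots> \<longleftrightarrow> sqrt (K / Am * T) \<le> B * s"
    using assms by (metis mult_pos_pos less_eq_real_def real_le_lsqrt real_sqrt_le_iff real_sqrt_unique
        real_le_rsqrt zero_le_divide_iff mult_nonneg_nonneg)
  also have "\<dots> \<longleftrightarrow> 1 / s * sqrt (K / Am * T) \<le> B"
    using assms by (simp add: field_simps)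
  finally show ?thesis .
qed
theorem mainTheorem6:
  fixes Ntier NPD :: nat
    and FF KPD nCPC Pt w RPD Gam N0 FOVmin Lmax Amax :: real
  assumes "Ntier \<ge> 1" and "NPD \<ge> 1"
    and "0 < FF" and "FF \<le> 1" and "0 < KPD" and "nCPC \<ge> 1"
    and "0 < Pt" and "0 < w" and "0 < RPD" and "0 < Gam" and "0 < N0"
    and "0 < FOVmin" and "FOVmin \<le> pi/2" and "0 < Lmax" and "0 < Amax"
  defines "S \<equiv> {(B, FOV). 0 < B \<and> FOV \<in> {0<..pi/2} \<and> FOV \<ge> FOVmin
              \<and> L_ADR KPD NPD FF nCPC Ntier B FOV \<le> Lmax
              \<and> A_ADR KPD NPD FF nCPC Ntier B FOV \<le> Amax}"
    and "T \<equiv> {(B, FOV). 0 < B \<and> FOV \<in> {0<..pi/2}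
              \<and> ereal FOV \<ge> fFOV KPD NPD FF nCPC Ntier FOVmin Lmax Amax B}"
    and "R \<equiv> (\<lambda>(B, FOV). Rate RPD Gam N0 Pt w KPD NPD FF nCPC Ntier B FOV)"
  shows "S = T \<and>
         (\<forall>p. (p \<in> S \<and> (\<forall>q\<in>S. R q \<le> R p)) \<longleftrightarrow> (p \<in> T \<and> (\<forall>q\<in>T. R q \<le> R p)))"
proof -
  have K1p: "0 < K1 KPD NPD FF" using assms(2,3,5) by (simp add: K1_def)
  have K2p: "0 < K2 KPD NPD FF nCPC" using assms(2,3,5,6) by (simp add: K2_def)
  have L: "L_ADR KPD NPD FF nCPC Ntier B x \<le> Lmax \<longleftrightarrow> fL KPD NPD FF nCPC Ntier Lmax x \<le> B"
    if "0 < B" for B x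
    unfolding L_ADR_def fL_def Let_def using L_equiv_gen[OF that assms(14)] by blast
  have A: "A_ADR KPD NPD FF nCPC Ntier B x \<le> Amax \<longleftrightarrow> fA KPD NPD FF nCPC Ntier Amax x \<le> B"
    if "0 < B" "0 < x" "x \<le> pi/2" for B x
  proof -
    have s: "0 < sin (thetaCPC Ntier x)" using sincos_anti[OF assms(1) that(2) order_refl that(3)] by simp
    have t: "0 \<le> tierSum Ntier (thetaCPC Ntier x)" using tierSum_ge1[OF assms(1) that(2,3)] by simp
    show ?thesis unfolding A_ADR_def fA_def Let_def
      using A_equiv_gen[OF that(1) assms(15) s K2p t] by blast
  qed
  have GL: "genInv (fL KPD NPD FF nCPC Ntier Lmax) B \<le> ereal x \<longleftrightarrow> fL KPD NPD FF nCPC Ntier Lmax x \<le> B"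
    if "0 < x" "x \<le> pi/2" for B x
    by (rule genInv_iff[OF _ _ that]) (auto intro!: fL_anti[OF assms(1)] fL_cont[OF assms(1)] K1p assms(14) simp: order_trans[OF _ assms(6)])
  have GA: "genInv (fA KPD NPD FF nCPC Ntier Amax) B \<le> ereal x \<longleftrightarrow> fA KPD NPD FF nCPC Ntier Amax x \<le> B"
    if "0 < x" "x \<le> pi/2" for B x
    by (rule genInv_iff[OF _ _ that]) (auto intro!: fA_anti[OF assms(1)] fA_cont[OF assms(1)] K2p assms(15))
  have ST: "S = T"
  proof (rule set_eqI)
    fix p :: "real \<times> real"
    obtain B x where p: "p = (B, x)" by (cases p)
    show "p \<in> S \<longleftrightarrow> p \<in> T"
      unfolding p S_def T_def fFOV_def using L A GL GA by auto
  qed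
  then show ?thesis by simp
qed

end
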